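(* Let $E$ be a regular $(a,b)$-module and let $0=F_0\subsetneq F_1\subsetneq\dots\subsetneq F_n=E$ be a Jordan–Hölder composition series with $F_i/F_{i-1}\simeq E_{\lambda_i}$ for all $i$. Suppose there is $j$ with $\lambda_{j+1}\not\equiv\lambda_j\pmod{\mathbb{Z}}$. Then there is another Jordan–Hölder composition series of $E$ which differs from the given one only in the $j$-th term, replaced by some $F'_j$, such that $F'_j/F_{j-1}\simeq E_{\lambda'_j}$ and $F_{j+1}/F'_j\simeq E_{\lambda'_{j+1}}$ with $\lambda_j\equiv\lambda'_{j+1}\pmod{\mathbb{Z}}$ and $\lambda_{j+1}\equiv\lambda'_j\pmod{\mathbb{Z}}$.
   Context: An $(a,b)$-module is a free module $E$ of finite rank over $\mathbb{C}[[b]]$ with a $\mathbb{C}$-linear endomorphism $a$ satisfying $ab-ba=b^2$. A sub-$(a,b)$-module is a sub-$\mathbb{C}[[b]]$-module stable by $a$; it is normal if the quotient is free over $\mathbb{C}[[b]]$. $E$ is regular if it embeds into an $(a,b)$-module $E'$ with $aE'\subset bE'$. $E_\lambda$ is the rank-one $(a,b)$-module generated by $e_\lambda$ with $ae_\lambda=\lambda be_\lambda$. A Jordan–Hölder composition series of a regular $E$ of rank $n$ is a chain $0=F_0\subsetneq\dots\subsetneq F_n=E$ of normal sub-$(a,b)$-modules of $E$ with $F_i$ of rank $i$; the quotients $F_i/F_{i-1}$ are then isomorphic to some $E_{\lambda_i}$. *)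

theory Defs
  imports "HOL-Computational_Algebra.Formal_Power_Series"
begin

text \<open>An (a,b)-module: the whole type 'v, a module over C[[b]] (complex fps; b = fps_X)
  via sc, free of finite rank, with a C-linear map a such that ab - ba = b^2.\<close>

definition ab_module :: "(complex fps \<Rightarrow> 'v::ab_group_add \<Rightarrow> 'v) \<Rightarrow> ('v \<Rightarrow> 'v) \<Rightarrow> bool" where
  "ab_module sc a \<longleftrightarrow>
     module sc \<and>
     (\<exists>B. finite B \<and> \<not> module.dependent sc B \<and> module.span sc B = UNIV) \<and>
     (\<forall>x y. a (x + y) = a x + a y) \<and>
     (\<forall>c x. a (sc (fps_const c) x) = sc (fps_const c) (a x)) \<and>
     (\<forall>x. a (sc fps_X x) - sc fps_X (a x) = sc (fps_X ^ 2) x)"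

definition ab_regular_embedding ::
  "(complex fps \<Rightarrow> 'v::ab_group_add \<Rightarrow> 'v) \<Rightarrow> ('v \<Rightarrow> 'v) \<Rightarrow>
   (complex fps \<Rightarrow> 'w::ab_group_add \<Rightarrow> 'w) \<Rightarrow> ('w \<Rightarrow> 'w) \<Rightarrow> ('v \<Rightarrow> 'w) \<Rightarrow> bool" where
  "ab_regular_embedding sc a sc' a' f \<longleftrightarrow>
     ab_module sc' a' \<and>
     (\<forall>x y. f (x + y) = f x + f y) \<and> (\<forall>c x. f (sc c x) = sc' c (f x)) \<and>
     inj f \<and> (\<forall>x. f (a x) = a' (f x)) \<and>
     (\<forall>y. \<exists>z. a' y = sc' fps_X z)"

definition ab_submodule :: "(complex fps \<Rightarrow> 'v::ab_group_add \<Rightarrow> 'v) \<Rightarrow> ('v \<Rightarrow> 'v) \<Rightarrow> 'v set \<Rightarrow> bool" where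
  "ab_submodule sc a F \<longleftrightarrow> module.subspace sc F \<and> a ` F \<subseteq> F"

text \<open>G/F is a free C[[b]]-module of finite rank: finitely many elements of G whose
  classes form a basis of G/F.\<close>

definition quotient_free :: "(complex fps \<Rightarrow> 'v::ab_group_add \<Rightarrow> 'v) \<Rightarrow> 'v set \<Rightarrow> 'v set \<Rightarrow> bool" where
  "quotient_free sc G F \<longleftrightarrow>
     (\<exists>(g::nat \<Rightarrow> 'v) k. (\<forall>i<k. g i \<in> G) \<and>
        (\<forall>x\<in>G. \<exists>c. x - (\<Sum>i<k. sc (c i) (g i)) \<in> F) \<and>
        (\<forall>c. (\<Sum>i<k. sc (c i) (g i)) \<in> F \<longrightarrow> (\<forall>i<k. c i = 0)))"

definition normal_ab_submodule :: "(complex fps \<Rightarrow> 'v::ab_group_add \<Rightarrow> 'v) \<Rightarrow> ('v \<Rightarrow> 'v) \<Rightarrow> 'v set \<Rightarrow> bool" where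
  "normal_ab_submodule sc a F \<longleftrightarrow> ab_submodule sc a F \<and> quotient_free sc UNIV F"

definition has_rank :: "(complex fps \<Rightarrow> 'v::ab_group_add \<Rightarrow> 'v) \<Rightarrow> 'v set \<Rightarrow> nat \<Rightarrow> bool" where
  "has_rank sc F r \<longleftrightarrow>
     (\<exists>B. B \<subseteq> F \<and> finite B \<and> \<not> module.dependent sc B \<and> module.span sc B = F \<and> card B = r)"

text \<open>The action of a on E_lambda = C[[b]] e_lambda, in the coordinate S of S e_lambda:
  a (S e) = (lambda b S + b^2 S') e.\<close>

definition E_lambda_a :: "complex \<Rightarrow> complex fps \<Rightarrow> complex fps" where
  "E_lambda_a lam S = fps_const lam * fps_X * S + fps_X ^ 2 * fps_deriv S"

text \<open>G/F is isomorphic to E_lambda as (a,b)-module (F a sub-(a,b)-module of G):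
  there is a surjective C[[b]]-linear map G -> E_lambda = C[[b]] with kernel F
  commuting with a (first isomorphism theorem).\<close>

definition quotient_iso_E_lambda ::
  "(complex fps \<Rightarrow> 'v::ab_group_add \<Rightarrow> 'v) \<Rightarrow> ('v \<Rightarrow> 'v) \<Rightarrow> 'v set \<Rightarrow> 'v set \<Rightarrow> complex \<Rightarrow> bool" where
  "quotient_iso_E_lambda sc a G F lam \<longleftrightarrow>
     (\<exists>\<phi> :: 'v \<Rightarrow> complex fps.
        (\<forall>x\<in>G. \<forall>y\<in>G. \<phi> (x + y) = \<phi> x + \<phi> y) \<and>
        (\<forall>c. \<forall>x\<in>G. \<phi> (sc c x) = c * \<phi> x) \<and>
        \<phi> ` G = UNIV \<and>
        {x\<in>G. \<phi> x = 0} = F \<and>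
        (\<forall>x\<in>G. \<phi> (a x) = E_lambda_a lam (\<phi> x)))"

definition JH_series :: "(complex fps \<Rightarrow> 'v::ab_group_add \<Rightarrow> 'v) \<Rightarrow> ('v \<Rightarrow> 'v) \<Rightarrow> nat \<Rightarrow> (nat \<Rightarrow> 'v set) \<Rightarrow> bool" where
  "JH_series sc a n F \<longleftrightarrow>
     F 0 = {0} \<and> F n = UNIV \<and>
     (\<forall>i. 1 \<le> i \<and> i \<le> n \<longrightarrow> F (i - 1) \<subset> F i) \<and>
     (\<forall>i\<le>n. normal_ab_submodule sc a (F i) \<and> has_rank sc (F i) i)"

end

theory Submission
  imports Defs
begin


lemma fps_decomp: "(p::complex fps) = fps_const (fps_nth p 0) + fps_X * fps_shift 1 p"
  by (rule fps_ext) (auto simp: fps_nth_fps_const)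

lemma fps_zero_if_X: assumes "\<And>p. g p = fps_X * g (h p)" shows "(g p :: complex fps) = 0"
proof -
  have "\<forall>p. fps_nth (g p) n = 0" for n
  proof (induction n)
    case 0 then show ?case by (metis assms fps_X_mult_nth)
  next
    case (Suc n) then show ?case by (metis assms fps_X_mult_nth diff_Suc_1 nat.distinct(1))
  qed
  then show ?thesis by (simp add: fps_ext)
qed

lemma rank_step:
  fixes sc :: "complex fps \<Rightarrow> 'v::ab_group_add \<Rightarrow> 'v"
  assumes m: "module sc" and sub: "module.subspace sc F'" and F0F: "F0 \<subseteq> F'"
    and rk: "has_rank sc F0 r"
    and add: "\<forall>x\<in>F'. \<forall>y\<in>F'. \<psi> (x + y) = \<psi> x + \<psi> y"
    and scl: "\<forall>c. \<forall>x\<in>F'. \<psi> (sc c x) = c * \<psi> x"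
    and x: "x \<in> F'" "\<psi> x = 1"
    and ker: "{y\<in>F'. \<psi> y = 0} = F0"
  shows "has_rank sc F' (Suc r)"
proof -
  interpret m: module sc by (rule m)
  obtain B where B: "B \<subseteq> F0" "finite B" "\<not> m.dependent B" "m.span B = F0" "card B = r"
    using rk unfolding has_rank_def by blast
  have xB: "x \<notin> B" using B(1) ker x by force
  have sF0: "m.subspace F0" using B(4) by (metis m.subspace_span)
  have psi0: "\<psi> y = 0" if "y \<in> F0" for y using ker that by blast
  have sp: "m.span (insert x B) = F'"
  proof
    show "m.span (insert x B) \<subseteq> F'" using B F0F x sub by (intro m.span_minimal) auto
    show "F' \<subseteq> m.span (insert x B)"
    proof
      fix y assume y: "y \<in> F'"
      have "y - sc (\<psi> y) x \<in> F'" using y x sub m.subspace_diff m.subspace_scale by blast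
      moreover have "\<psi> (y - sc (\<psi> y) x) = 0"
      proof -
        have "\<psi> (y - sc (\<psi> y) x + sc (\<psi> y) x) = \<psi> (y - sc (\<psi> y) x) + \<psi> (sc (\<psi> y) x)"
          using add \<open>y - sc (\<psi> y) x \<in> F'\<close> x sub m.subspace_scale by blast
        then show ?thesis using scl x y by simp
      qed
      ultimately have "y - sc (\<psi> y) x \<in> m.span B" using ker B(4) by blast
      then show "y \<in> m.span (insert x B)" using m.span_breakdown_eq by blast
    qed
  qed
  have ind: "\<not> m.dependent (insert x B)"
  proof
    assume "m.dependent (insert x B)"
    then obtain u where u: "\<exists>v\<in>insert x B. u v \<noteq> 0" "(\<Sum>v\<in>insert x B. sc (u v) v) = 0"
      using m.dependent_finite B(2) by blast
    have eq: "sc (u x) x + (\<Sum>v\<in>B. sc (u v) v) = 0" using u(2) xB B(2) by simp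
    have sB: "(\<Sum>v\<in>B. sc (u v) v) \<in> F0" using B(1) sF0 by (intro m.subspace_sum) (auto intro: m.subspace_scale)
    have "sc (u x) x = - (\<Sum>v\<in>B. sc (u v) v)" using eq by (simp add: eq_neg_iff_add_eq_0)
    then have "sc (u x) x \<in> F0" using sB sF0 m.subspace_neg by metis
    then have "u x = 0" using psi0 scl x by fastforce
    then have "(\<Sum>v\<in>B. sc (u v) v) = 0" using eq by simp
    then have "\<forall>v\<in>B. u v = 0" using B(3) B(2) m.dependent_finite by blast
    then show False using u(1) \<open>u x = 0\<close> by blast
  qed
  have "insert x B \<subseteq> F'" using B(1) F0F x by auto
  moreover have "card (insert x B) = Suc r" using B xB by simp
  ultimately show ?thesis unfolding has_rank_def
    using sp ind B(2) by (intro exI[of _ "insert x B"]) simp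
qed

lemma qfree_step:
  fixes sc :: "complex fps \<Rightarrow> 'v::ab_group_add \<Rightarrow> 'v"
  assumes m: "module sc" and sub: "module.subspace sc G" and qf: "quotient_free sc UNIV G"
    and FG: "F' \<subseteq> G"
    and add: "\<forall>x\<in>G. \<forall>y\<in>G. \<phi> (x + y) = \<phi> x + \<phi> y"
    and scl: "\<forall>c. \<forall>x\<in>G. \<phi> (sc c x) = c * \<phi> x"
    and w: "w \<in> G" "\<phi> w = 1"
    and ker: "{y\<in>G. \<phi> y = 0} = F'"
  shows "quotient_free sc UNIV F'"
proof -
  interpret m: module sc by (rule m)
  obtain g0 :: "nat \<Rightarrow> 'v" and k0 where
    g1: "\<forall>x. \<exists>c. x - (\<Sum>i<k0. sc (c i) (g0 i)) \<in> G" and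
    g2: "\<forall>c. (\<Sum>i<k0. sc (c i) (g0 i)) \<in> G \<longrightarrow> (\<forall>i<k0. c i = 0)"
    using qf unfolding quotient_free_def by blast
  have phidiff: "\<phi> (x - y) = \<phi> x - \<phi> y" if "x \<in> G" "y \<in> G" for x y
  proof -
    have "x - y \<in> G" using that sub m.subspace_diff by blast
    then have "\<phi> (x - y + y) = \<phi> (x - y) + \<phi> y" using add that by blast
    then show ?thesis by simp
  qed
  define g where "g = g0(k0 := w)"
  have sumg: "(\<Sum>i<Suc k0. sc (c i) (g i)) = (\<Sum>i<k0. sc (c i) (g0 i)) + sc (c k0) w" for c
    unfolding g_def by (simp add: lessThan_Suc)
  show ?thesis unfolding quotient_free_def
  proof (intro exI[of _ g] exI[of _ "Suc k0"] conjI allI impI ballI)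
    fix x :: 'v
    obtain c where c: "x - (\<Sum>i<k0. sc (c i) (g0 i)) \<in> G" using g1 by blast
    define y where "y = x - (\<Sum>i<k0. sc (c i) (g0 i))"
    have "y - sc (\<phi> y) w \<in> G" using c w sub y_def m.subspace_diff m.subspace_scale by blast
    moreover have "\<phi> (y - sc (\<phi> y) w) = 0"
      using phidiff[of y "sc (\<phi> y) w"] c y_def w sub m.subspace_scale scl by simp
    ultimately have "y - sc (\<phi> y) w \<in> F'" using ker by blast
    moreover have "x - (\<Sum>i<Suc k0. sc ((c(k0 := \<phi> y)) i) (g i)) = y - sc (\<phi> y) w"
      unfolding sumg y_def by (simp add: algebra_simps)
    ultimately show "\<exists>c. x - (\<Sum>i<Suc k0. sc (c i) (g i)) \<in> F'" by metis
  next
    fix i :: nat assume "i < Suc k0"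
    show "g i \<in> UNIV" by simp
  next
    fix c i assume h: "(\<Sum>i<Suc k0. sc (c i) (g i)) \<in> F'" and i: "i < Suc k0"
    then have s: "(\<Sum>i<k0. sc (c i) (g0 i)) + sc (c k0) w \<in> G" using sumg FG by auto
    have "(\<Sum>i<k0. sc (c i) (g0 i)) \<in> G"
      using m.subspace_diff[OF sub s m.subspace_scale[OF sub w(1), of "c k0"]] by simp
    then have c0: "\<forall>i<k0. c i = 0" using g2 by blast
    then have "(\<Sum>i<k0. sc (c i) (g0 i)) = 0" by simp
    then have "sc (c k0) w \<in> F'" using h sumg by simp
    then have "c k0 = 0" using ker scl w by auto
    then show "c i = 0" using c0 i less_Suc_eq by blast
  qed
qed


lemma Dsh_alg:
  fixes sc :: "complex fps \<Rightarrow> 'v::ab_group_add \<Rightarrow> 'v"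
  assumes "module sc" and aadd: "\<And>y z. a (y + z) = a y + a z"
   and aconst: "\<And>c y. a (sc (fps_const c) y) = sc (fps_const c) (a y)"
   and aX: "\<And>y. a (sc fps_X y) = sc fps_X (a y) + sc (fps_X^2) y"
   and pd: "p = fps_const c + fps_X * q"
   and dp: "fps_deriv p = q + fps_X * fps_deriv q"
 shows "a (sc p x) - sc p (a x) - sc (fps_X^2 * fps_deriv p) x = sc fps_X (a (sc q x) - sc q (a x) - sc (fps_X^2 * fps_deriv q) x)"
proof -
  interpret m: module sc by fact
    have 1: "a (sc p x) = sc (fps_const c) (a x) + (sc fps_X (a (sc q x)) + sc (fps_X^2 * q) x)"
    proof -
      have "a (sc p x) = a (sc (fps_const c) x + sc fps_X (sc q x))"
        by (simp add: pd m.scale_left_distrib)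
      also have "\<dots> = sc (fps_const c) (a x) + (sc fps_X (a (sc q x)) + sc (fps_X^2) (sc q x))"
        by (simp only: aadd aconst aX)
      finally show ?thesis by simp
    qed
    have 2: "sc p (a x) = sc (fps_const c) (a x) + sc fps_X (sc q (a x))"
      by (simp add: pd m.scale_left_distrib)
    have 3: "sc (fps_X^2 * fps_deriv p) x = sc (fps_X^2 * q) x + sc fps_X (sc (fps_X^2 * fps_deriv q) x)"
    proof -
      have "fps_X^2 * fps_deriv p = fps_X^2 * q + fps_X * (fps_X^2 * fps_deriv q)"
        unfolding dp by (simp add: algebra_simps)
      then show ?thesis by (simp add: m.scale_left_distrib)
    qed
    show ?thesis unfolding 1 2 3 by (simp add: m.scale_right_diff_distrib)
qed

lemma leib:
  fixes sc :: "complex fps \<Rightarrow> 'v::ab_group_add \<Rightarrow> 'v"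
  assumes E: "ab_module sc a"
    and subG: "module.subspace sc G" and aG: "\<forall>y\<in>G. a y \<in> G" and HG: "H \<subseteq> G"
    and add2: "\<forall>x\<in>G. \<forall>y\<in>G. \<phi>2 (x + y) = \<phi>2 x + \<phi>2 y"
    and scl2: "\<forall>c. \<forall>x\<in>G. \<phi>2 (sc c x) = c * \<phi>2 x"
    and ker2: "{y\<in>G. \<phi>2 y = 0} = H"
    and com2: "\<forall>y\<in>G. \<phi>2 (a y) = E_lambda_a \<mu> (\<phi>2 y)"
    and scl1: "\<forall>c. \<forall>x\<in>H. \<phi>1 (sc c x) = c * \<phi>1 x"
    and x: "x \<in> G"
  shows "a (sc p x) - sc p (a x) - sc (fps_X^2 * fps_deriv p) x \<in> H \<and>
         \<phi>1 (a (sc p x) - sc p (a x) - sc (fps_X^2 * fps_deriv p) x) = 0"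
proof -
  interpret m: module sc using E unfolding ab_module_def by blast
  have aadd: "a (y + z) = a y + a z" for y z using E unfolding ab_module_def by blast
  have aconst: "a (sc (fps_const c) y) = sc (fps_const c) (a y)" for c y
    using E unfolding ab_module_def by blast
  have aX: "a (sc fps_X y) = sc fps_X (a y) + sc (fps_X^2) y" for y
  proof -
    have "a (sc fps_X y) - sc fps_X (a y) = sc (fps_X^2) y" using E unfolding ab_module_def by blast
    then show ?thesis by (simp add: diff_eq_eq add.commute)
  qed
  have phidiff: "\<phi>2 (y - z) = \<phi>2 y - \<phi>2 z" if "y \<in> G" "z \<in> G" for y z
  proof -
    have "y - z \<in> G" using that subG m.subspace_diff by blast
    then have "\<phi>2 (y - z + z) = \<phi>2 (y - z) + \<phi>2 z" using add2 that by blast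
    then show ?thesis by simp
  qed
  define D where "D p = a (sc p x) - sc p (a x) - sc (fps_X^2 * fps_deriv p) x" for p
  have g1: "sc p x \<in> G" "a (sc p x) \<in> G" "a x \<in> G" "sc p (a x) \<in> G" "sc (fps_X^2 * fps_deriv p) x \<in> G"
      "a (sc p x) - sc p (a x) \<in> G" for p
  proof -
    show 1: "sc p x \<in> G" using x subG m.subspace_scale by blast
    show 2: "a (sc p x) \<in> G" using 1 aG by blast
    show 3: "a x \<in> G" using x aG by blast
    show 4: "sc p (a x) \<in> G" using 3 subG m.subspace_scale by blast
    show "sc (fps_X^2 * fps_deriv p) x \<in> G" using x subG m.subspace_scale by blast
    show "a (sc p x) - sc p (a x) \<in> G" using 2 4 subG m.subspace_diff by blast
  qed
  have DG: "D p \<in> G" for p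
    unfolding D_def using g1 subG m.subspace_diff by blast
  have DH: "D p \<in> H" for p
  proof -
    have "\<phi>2 (D p) = \<phi>2 (a (sc p x)) - \<phi>2 (sc p (a x)) - \<phi>2 (sc (fps_X^2 * fps_deriv p) x)"
      unfolding D_def using g1 phidiff by simp
    also have "\<dots> = E_lambda_a \<mu> (p * \<phi>2 x) - p * E_lambda_a \<mu> (\<phi>2 x) - fps_X^2 * fps_deriv p * \<phi>2 x"
      using g1 com2 scl2 x by simp
    also have "\<dots> = 0" unfolding E_lambda_a_def by (simp add: fps_deriv_mult algebra_simps)
    finally show ?thesis using DG ker2 by blast
  qed
  have Dc: "D (fps_const c) = 0" for c unfolding D_def using aconst by simp
  have Dsh: "D p = sc fps_X (D (fps_shift 1 p))" for p
  proof -
    have pd: "p = fps_const (fps_nth p 0) + fps_X * fps_shift 1 p" by (rule fps_decomp)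
    have dp: "fps_deriv p = fps_shift 1 p + fps_X * fps_deriv (fps_shift 1 p)" by (subst pd) simp
    show ?thesis unfolding D_def by (rule Dsh_alg[OF m.module_axioms aadd aconst aX pd dp])
  qed
  define g where "g p = \<phi>1 (D p)" for p
  have "g p = fps_X * g (fps_shift 1 p)" for p
  proof -
    have "g p = \<phi>1 (sc fps_X (D (fps_shift 1 p)))" unfolding g_def by (subst Dsh) (rule refl)
    also have "\<dots> = fps_X * g (fps_shift 1 p)" unfolding g_def using scl1 DH by blast
    finally show ?thesis .
  qed
  then have "g p = 0" by (rule fps_zero_if_X)
  then show ?thesis using DH unfolding g_def D_def by simp
qed

lemma swap_final:
  fixes sc :: "complex fps \<Rightarrow> 'v::ab_group_add \<Rightarrow> 'v"
  assumes m: "module sc" and JH: "JH_series sc a n F" and j: "1 \<le> j" "j + 1 \<le> n"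
    and F'def: "F' = {x \<in> F (j+1). \<phi> x = 0}"
    and padd: "\<forall>x\<in>F (j+1). \<forall>y\<in>F (j+1). \<phi> (x + y) = \<phi> x + \<phi> y"
    and pscl: "\<forall>c. \<forall>x\<in>F (j+1). \<phi> (sc c x) = c * \<phi> x"
    and w: "w \<in> F (j+1)" "\<phi> w = 1"
    and pcom: "\<forall>x\<in>F (j+1). \<phi> (a x) = E_lambda_a l1 (\<phi> x)"
    and sadd: "\<forall>x\<in>F'. \<forall>y\<in>F'. \<psi> (x + y) = \<psi> x + \<psi> y"
    and sscl: "\<forall>c. \<forall>x\<in>F'. \<psi> (sc c x) = c * \<psi> x"
    and v: "v \<in> F'" "\<psi> v = 1"
    and sker: "{x \<in> F'. \<psi> x = 0} = F (j - 1)"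
    and scom: "\<forall>x\<in>F'. \<psi> (a x) = E_lambda_a l0 (\<psi> x)"
  shows "JH_series sc a n (F(j := F')) \<and> quotient_iso_E_lambda sc a F' (F (j - 1)) l0 \<and>
         quotient_iso_E_lambda sc a (F (j + 1)) F' l1"
proof -
  interpret m: module sc by (rule m)
  have nG: "normal_ab_submodule sc a (F (j+1))" and rG: "has_rank sc (F (j-1)) (j-1)"
    using JH j unfolding JH_series_def by auto
  then have subG: "m.subspace (F (j+1))" and aG: "a ` F (j+1) \<subseteq> F (j+1)"
    and qG: "quotient_free sc UNIV (F (j+1))"
    unfolding normal_ab_submodule_def ab_submodule_def by auto
  have p0: "\<phi> 0 = 0" using padd m.subspace_0[OF subG] by (metis add_cancel_right_left add_0)
  have subF': "m.subspace F'"
  proof (rule m.subspaceI)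
    show "0 \<in> F'" using F'def p0 m.subspace_0[OF subG] by simp
    show "x + y \<in> F'" if "x \<in> F'" "y \<in> F'" for x y
      using that F'def padd m.subspace_add[OF subG] by auto
    show "sc c x \<in> F'" if "x \<in> F'" for c x
      using that F'def pscl m.subspace_scale[OF subG] by auto
  qed
  have aF': "a ` F' \<subseteq> F'"
  proof
    fix y assume "y \<in> a ` F'"
    then obtain x where x: "x \<in> F'" "y = a x" by blast
    then show "y \<in> F'" using F'def aG pcom unfolding E_lambda_a_def by auto
  qed
  have F'G: "F' \<subseteq> F (j+1)" using F'def by auto
  have F0F': "F (j-1) \<subseteq> F'" using sker by auto
  have qF': "quotient_free sc UNIV F'"
    by (rule qfree_step[OF m subG qG F'G padd pscl w]) (use F'def in auto)
  have rF': "has_rank sc F' j"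
    using rank_step[OF m subF' F0F' rG sadd sscl v sker] j by simp
  have nF': "normal_ab_submodule sc a F'"
    unfolding normal_ab_submodule_def ab_submodule_def using subF' aF' qF' by blast
  have iso0: "quotient_iso_E_lambda sc a F' (F (j - 1)) l0"
    unfolding quotient_iso_E_lambda_def
  proof (intro exI[of _ \<psi>] conjI)
    show "\<psi> ` F' = UNIV"
    proof (rule surjI[of _ "\<lambda>c. sc c v"] | intro set_eqI iffI)
      fix c :: "complex fps"
      show "c \<in> \<psi> ` F'" using v sscl m.subspace_scale[OF subF' v(1), of c]
        by (metis image_eqI mult.right_neutral)
    qed simp
  qed (use sadd sscl sker scom in auto)
  have iso1: "quotient_iso_E_lambda sc a (F (j + 1)) F' l1"
    unfolding quotient_iso_E_lambda_def
  proof (intro exI[of _ \<phi>] conjI)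
    show "\<phi> ` F (j+1) = UNIV"
    proof (intro set_eqI iffI)
      fix c :: "complex fps"
      show "c \<in> \<phi> ` F (j+1)" using w pscl m.subspace_scale[OF subG w(1), of c]
        by (metis image_eqI mult.right_neutral)
    qed simp
  qed (use padd pscl F'def pcom in auto)
  have vn: "v \<notin> F (j-1)"
  proof
    assume "v \<in> F (j-1)"
    then have "v \<in> {x \<in> F'. \<psi> x = 0}" using sker by simp
    then show False using v by simp
  qed
  have wn: "w \<notin> F'" using w F'def by auto
  have JH': "JH_series sc a n (F(j := F'))"
    unfolding JH_series_def
  proof (intro conjI allI impI)
    show "(F(j := F')) 0 = {0}" using JH j unfolding JH_series_def by simp
    show "(F(j := F')) n = UNIV" using JH j unfolding JH_series_def by simp
  next
    fix i assume i: "1 \<le> i \<and> i \<le> n"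
    show "(F(j := F')) (i - 1) \<subset> (F(j := F')) i"
    proof (cases "i = j")
      case True then show ?thesis using F0F' v vn j by auto
    next
      case False
      show ?thesis
      proof (cases "i = j + 1")
        case True then show ?thesis using F'G w wn by auto
      next
        case False
        then have "i - 1 \<noteq> j" using i by auto
        then show ?thesis using \<open>i \<noteq> j\<close> i JH unfolding JH_series_def by auto
      qed
    qed
  next
    fix i assume i: "i \<le> n"
    show "normal_ab_submodule sc a ((F(j := F')) i)"
      using nF' JH i unfolding JH_series_def by (cases "i = j") auto
    show "has_rank sc ((F(j := F')) i) i"
      using rF' JH i unfolding JH_series_def by (cases "i = j") auto
  qed
  show ?thesis using JH' iso0 iso1 by blast
qed

lemma idA:
  assumes "S + fps_const (l-u-1) * (fps_X*T1) + fps_X * fps_deriv (fps_X*T1) = 0"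
  shows "E_lambda_a l Q + S*P - T1 * E_lambda_a u P = E_lambda_a l (Q - T1*P)"
proof -
  have c1: "fps_const (l-u-1) = fps_const l - fps_const u - 1" by (metis fps_const_sub fps_const_1_eq_1)
  have c2: "fps_const (l-1) = fps_const l - 1" by (metis fps_const_sub fps_const_1_eq_1)
  have c3: "fps_const (u+1) = fps_const u + 1" by (metis fps_const_add fps_const_1_eq_1)
  have S: "S = - (fps_const (l-u-1) * (fps_X*T1) + fps_X * fps_deriv (fps_X*T1))"
    using assms(1)[unfolded add.assoc] by (rule iffD2[OF eq_neg_iff_add_eq_0])
  show ?thesis unfolding S E_lambda_a_def c1 c2 c3
    by (simp add: fps_deriv_mult algebra_simps power2_eq_square c1 c2 c3 del: fps_const_sub fps_const_add fps_const_neg fps_const_mult)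
qed
lemma idB1:
  assumes "S + fps_const (l-u-1) * T + fps_X * fps_deriv T = 0"
  shows "T * E_lambda_a u P - fps_X * (E_lambda_a l Q + S*P) = E_lambda_a (l-1) (T*P - fps_X*Q)"
proof -
  have c1: "fps_const (l-u-1) = fps_const l - fps_const u - 1" by (metis fps_const_sub fps_const_1_eq_1)
  have c2: "fps_const (l-1) = fps_const l - 1" by (metis fps_const_sub fps_const_1_eq_1)
  have c3: "fps_const (u+1) = fps_const u + 1" by (metis fps_const_add fps_const_1_eq_1)
  have S: "S = - (fps_const (l-u-1) * T + fps_X * fps_deriv T)"
    using assms(1)[unfolded add.assoc] by (rule iffD2[OF eq_neg_iff_add_eq_0])
  show ?thesis unfolding S E_lambda_a_def c1 c2 c3
    by (simp add: fps_deriv_mult algebra_simps power2_eq_square c1 c2 c3 del: fps_const_sub fps_const_add fps_const_neg fps_const_mult)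
qed
lemma idB2:
  assumes "S + fps_const (l-u-1) * T + fps_X * fps_deriv T = 0" "T = fps_const t0 + fps_X * R"
   and "T*P = fps_X*Q"
  shows "(E_lambda_a l Q + S*P) - R * E_lambda_a u P = E_lambda_a (u+1) (Q - R*P)"
proof -
  have c1: "fps_const (l-u-1) = fps_const l - fps_const u - 1" by (metis fps_const_sub fps_const_1_eq_1)
  have c3: "fps_const (u+1) = fps_const u + 1" by (metis fps_const_add fps_const_1_eq_1)
  have S: "S = - (fps_const (l-u-1) * T + fps_X * fps_deriv T)"
    using assms(1)[unfolded add.assoc] by (rule iffD2[OF eq_neg_iff_add_eq_0])
  have "E_lambda_a (u+1) (Q - R*P) - ((E_lambda_a l Q + S*P) - R * E_lambda_a u P)
     = (fps_const u + 1 - fps_const l) * (fps_X*Q) - fps_X*R*P - fps_X^2*fps_deriv R*P - S*P"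
    unfolding E_lambda_a_def c3
    by (simp add: fps_deriv_mult algebra_simps power2_eq_square del: fps_const_sub fps_const_add fps_const_neg fps_const_mult)
  also have "\<dots> = (fps_const u + 1 - fps_const l) * (T*P) - fps_X*R*P - fps_X^2*fps_deriv R*P - S*P"
    using assms(3) by simp
  also have "\<dots> = 0"
    unfolding S c1 assms(2)
    by (simp add: fps_deriv_mult algebra_simps power2_eq_square del: fps_const_sub fps_const_add fps_const_neg fps_const_mult)
  finally show ?thesis by simp
qed

lemma T_eq:
  fixes S :: "complex fps"
  assumes nz: "\<And>k::nat. of_nat k + (l - u - 1) \<noteq> 0"
  shows "S + fps_const (l-u-1) * Abs_fps (\<lambda>k. - fps_nth S k / (of_nat k + (l - u - 1)))
           + fps_X * fps_deriv (Abs_fps (\<lambda>k. - fps_nth S k / (of_nat k + (l - u - 1)))) = 0"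
proof (rule fps_ext)
  fix k
  define T where "T = Abs_fps (\<lambda>k. - fps_nth S k / (of_nat k + (l - u - 1)))"
  have 1: "fps_nth (fps_X * fps_deriv T) k = of_nat k * fps_nth T k" by (cases k) simp_all
  have 2: "fps_nth T k = - fps_nth S k / (of_nat k + (l - u - 1))" unfolding T_def by simp
  have "fps_nth S k + (l-u-1) * fps_nth T k + of_nat k * fps_nth T k
      = fps_nth S k + (of_nat k + (l-u-1)) * fps_nth T k" by (simp add: algebra_simps)
  also have "\<dots> = 0" unfolding 2 using nz[of k] by simp
  finally show "fps_nth (S + fps_const (l-u-1) * T + fps_X * fps_deriv T) k = fps_nth 0 k"
    using 1 by simp
qed

lemma nz_lem:
  fixes l u :: complex
  assumes "u - l \<notin> \<int>"
  shows "of_nat k + (l - u - 1) \<noteq> 0"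
proof
  assume "of_nat k + (l - u - 1) = 0"
  then have "u - l = of_int (int k - 1)" by (simp add: algebra_simps)
  then show False using assms by (metis Ints_of_int)
qed


theorem mainTheorem4:
  fixes sc :: "complex fps \<Rightarrow> 'v::ab_group_add \<Rightarrow> 'v"
    and a :: "'v \<Rightarrow> 'v"
    and n j :: nat
    and F :: "nat \<Rightarrow> 'v set"
    and lam :: "nat \<Rightarrow> complex"
  assumes E: "ab_module sc a"
    and reg: "\<exists>(sc' :: complex fps \<Rightarrow> 'w::ab_group_add \<Rightarrow> 'w) a' f.
                 ab_regular_embedding sc a sc' a' f"
    and JH: "JH_series sc a n F"
    and quot: "\<forall>i. 1 \<le> i \<and> i \<le> n \<longrightarrow> quotient_iso_E_lambda sc a (F i) (F (i - 1)) (lam i)"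
    and j: "1 \<le> j" "j + 1 \<le> n"
    and nc: "lam (j + 1) - lam j \<notin> \<int>"
  shows "\<exists>F' lj' lj1'.
           F' \<noteq> F j \<and>
           JH_series sc a n (F(j := F')) \<and>
           quotient_iso_E_lambda sc a F' (F (j - 1)) lj' \<and>
           quotient_iso_E_lambda sc a (F (j + 1)) F' lj1' \<and>
           lam j - lj1' \<in> \<int> \<and> lam (j + 1) - lj' \<in> \<int>"
proof -
  interpret m: module sc using E unfolding ab_module_def by blast
  have mod: "module sc" by (rule m.module_axioms)
  have aadd: "a (y + z) = a y + a z" for y z using E unfolding ab_module_def by blast
  define l where "l = lam j"
  define u where "u = lam (j+1)"
  define G where "G = F (j+1)"
  define H where "H = F j"
  define F0 where "F0 = F (j-1)"
  have nH: "normal_ab_submodule sc a H" and nG: "normal_ab_submodule sc a G"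
    using JH j unfolding JH_series_def G_def H_def by auto
  then have subG: "m.subspace G" and aG: "\<forall>y\<in>G. a y \<in> G"
    and subH: "m.subspace H" and aH: "\<forall>y\<in>H. a y \<in> H"
    unfolding normal_ab_submodule_def ab_submodule_def by auto
  have F0H: "F0 \<subseteq> H" using JH j unfolding JH_series_def F0_def H_def by auto
  have HG: "H \<subseteq> G"
  proof -
    have "1 \<le> j+1 \<and> j+1 \<le> n \<longrightarrow> F (j + 1 - 1) \<subset> F (j+1)" using JH unfolding JH_series_def by blast
    then have "F (j + 1 - 1) \<subset> F (j+1)" using j by simp
    then show ?thesis unfolding G_def H_def by auto
  qed
  obtain \<phi>1 :: "'v \<Rightarrow> complex fps" where
    add1: "\<forall>x\<in>H. \<forall>y\<in>H. \<phi>1 (x + y) = \<phi>1 x + \<phi>1 y" and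
    scl1: "\<forall>c. \<forall>x\<in>H. \<phi>1 (sc c x) = c * \<phi>1 x" and
    sur1: "\<phi>1 ` H = UNIV" and ker1: "{x\<in>H. \<phi>1 x = 0} = F0" and
    com1: "\<forall>x\<in>H. \<phi>1 (a x) = E_lambda_a l (\<phi>1 x)"
    using quot j unfolding quotient_iso_E_lambda_def H_def F0_def l_def by auto
  obtain \<phi>2 :: "'v \<Rightarrow> complex fps" where
    add2: "\<forall>x\<in>G. \<forall>y\<in>G. \<phi>2 (x + y) = \<phi>2 x + \<phi>2 y" and
    scl2: "\<forall>c. \<forall>x\<in>G. \<phi>2 (sc c x) = c * \<phi>2 x" and
    sur2: "\<phi>2 ` G = UNIV" and ker2: "{x\<in>G. \<phi>2 x = 0} = H" and
    com2: "\<forall>x\<in>G. \<phi>2 (a x) = E_lambda_a u (\<phi>2 x)"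
  proof -
    have "quotient_iso_E_lambda sc a (F (j+1)) (F (j + 1 - 1)) (lam (j+1))" using quot j by auto
    then show ?thesis using that unfolding quotient_iso_E_lambda_def G_def H_def u_def by auto
  qed
  obtain e1 where e1: "e1 \<in> H" "\<phi>1 e1 = 1" using sur1 by (metis UNIV_I imageE)
  obtain e2 where e2: "e2 \<in> G" "\<phi>2 e2 = 1" using sur2 by (metis UNIV_I imageE)
  have e1G: "e1 \<in> G" using e1 HG by auto
  have d1: "\<phi>1 (x - y) = \<phi>1 x - \<phi>1 y" if "x \<in> H" "y \<in> H" for x y
  proof -
    have "x - y \<in> H" using that subH m.subspace_diff by blast
    then have "\<phi>1 (x - y + y) = \<phi>1 (x - y) + \<phi>1 y" using add1 that by blast
    then show ?thesis by simp
  qed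
  have d2: "\<phi>2 (x - y) = \<phi>2 x - \<phi>2 y" if "x \<in> G" "y \<in> G" for x y
  proof -
    have "x - y \<in> G" using that subG m.subspace_diff by blast
    then have "\<phi>2 (x - y + y) = \<phi>2 (x - y) + \<phi>2 y" using add2 that by blast
    then show ?thesis by simp
  qed
  have inH: "x \<in> H" if "x \<in> G" "\<phi>2 x = 0" for x using that ker2 by blast
  have inF0: "x \<in> F0" if "x \<in> H" "\<phi>1 x = 0" for x using that ker1 by blast
  have Hz: "\<phi>2 x = 0" if "x \<in> H" for x using that ker2 by blast
  have F0z: "\<phi>1 x = 0" if "x \<in> F0" for x using that ker1 by blast
  define h where "h = a e2 - sc (fps_const u * fps_X) e2"
  have hH: "h \<in> H"
  proof -
    have "a e2 \<in> G" "sc (fps_const u * fps_X) e2 \<in> G" using e2 aG subG m.subspace_scale by auto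
    moreover have "\<phi>2 h = 0" unfolding h_def using d2 calculation com2 scl2 e2
      by (simp add: E_lambda_a_def)
    ultimately show ?thesis using inH h_def subG m.subspace_diff by blast
  qed
  define S where "S = \<phi>1 h"
  define Q where "Q x = \<phi>1 (x - sc (\<phi>2 x) e2)" for x
  have yH: "x - sc (\<phi>2 x) e2 \<in> H" if "x \<in> G" for x
  proof -
    have "sc (\<phi>2 x) e2 \<in> G" using e2 subG m.subspace_scale by blast
    then have "x - sc (\<phi>2 x) e2 \<in> G" "\<phi>2 (x - sc (\<phi>2 x) e2) = 0"
      using that d2 subG m.subspace_diff scl2 e2 by auto
    then show ?thesis using inH by blast
  qed
  have Qadd: "Q (x + y) = Q x + Q y" if "x \<in> G" "y \<in> G" for x y
  proof -
    have eq: "x + y - sc (\<phi>2 (x + y)) e2 = (x - sc (\<phi>2 x) e2) + (y - sc (\<phi>2 y) e2)"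
      using add2 that by (simp add: m.scale_left_distrib algebra_simps)
    show ?thesis unfolding Q_def eq using add1 yH[OF that(1)] yH[OF that(2)] by blast
  qed
  have Qscl: "Q (sc c x) = c * Q x" if "x \<in> G" for c x
  proof -
    have eq: "sc c x - sc (\<phi>2 (sc c x)) e2 = sc c (x - sc (\<phi>2 x) e2)"
      using scl2 that by (simp add: m.scale_right_diff_distrib)
    show ?thesis unfolding Q_def eq using scl1 yH[OF that] by blast
  qed
  have Qa: "Q (a x) = E_lambda_a l (Q x) + S * \<phi>2 x" if x: "x \<in> G" for x
  proof -
    define p where "p = \<phi>2 x"
    define y where "y = x - sc p e2"
    define L where "L = a (sc p e2) - sc p (a e2) - sc (fps_X^2 * fps_deriv p) e2"
    have yH': "y \<in> H" unfolding y_def p_def using yH x by blast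
    have LH: "L \<in> H" and L0: "\<phi>1 L = 0"
      using leib[OF E subG aG HG add2 scl2 ker2 com2 scl1 e2(1), of p] unfolding L_def by auto
    have p2: "\<phi>2 (a x) = fps_const u * fps_X * p + fps_X^2 * fps_deriv p"
      using com2 x unfolding p_def E_lambda_a_def by simp
    have eq: "a x - sc (\<phi>2 (a x)) e2 = a y + (L + sc p h)"
    proof -
      have "x = y + sc p e2" unfolding y_def by simp
      then have "a x = a y + a (sc p e2)" by (metis aadd)
      moreover have "a (sc p e2) = L + sc p (a e2) + sc (fps_X^2 * fps_deriv p) e2"
        unfolding L_def by simp
      moreover have "sc p (a e2) = sc p h + sc (p * (fps_const u * fps_X)) e2"
        unfolding h_def by (simp add: m.scale_right_diff_distrib)
      moreover have "sc (\<phi>2 (a x)) e2 = sc (p * (fps_const u * fps_X)) e2 + sc (fps_X^2 * fps_deriv p) e2"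
      proof -
        have "fps_const u * fps_X * p + fps_X^2 * fps_deriv p = p * (fps_const u * fps_X) + fps_X^2 * fps_deriv p"
          by (simp add: mult.commute)
        then show ?thesis unfolding p2 by (simp only: m.scale_left_distrib)
      qed
      ultimately show ?thesis by (simp add: algebra_simps)
    qed
    have ayH: "a y \<in> H" using aH yH' by blast
    have phH: "sc p h \<in> H" using hH subH m.subspace_scale by blast
    have "Q (a x) = \<phi>1 (a y + (L + sc p h))" unfolding Q_def eq by simp
    also have "\<dots> = \<phi>1 (a y) + (\<phi>1 L + \<phi>1 (sc p h))"
    proof -
      have "L + sc p h \<in> H" using LH phH subH m.subspace_add by blast
      then show ?thesis using add1[rule_format] ayH LH phH by simp
    qed
    also have "\<dots> = E_lambda_a l (\<phi>1 y) + p * S"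
      using com1 yH' L0 scl1 hH S_def by simp
    finally show ?thesis unfolding Q_def y_def p_def by (simp add: mult.commute)
  qed
  have F0G: "F0 \<subseteq> G" using F0H HG by auto
  have F0P: "\<phi>2 x = 0" "Q x = 0" if "x \<in> F0" for x
    using that F0H Hz F0z unfolding Q_def by auto
  have kerPQ: "x \<in> F0" if "x \<in> G" "\<phi>2 x = 0" "Q x = 0" for x
    using that inH inF0 unfolding Q_def by simp
  have Pe1: "\<phi>2 e1 = 0" using Hz e1 by blast
  have Qe1: "Q e1 = 1" unfolding Q_def using Pe1 e1 by simp
  have p10: "\<phi>1 0 = 0" using add1 m.subspace_0[OF subH] by (metis add_cancel_right_right)
  have Qe2: "Q e2 = 0" unfolding Q_def using e2 p10 by simp
  have PQadd: "\<phi>2 (x + y) = \<phi>2 x + \<phi>2 y" "Q (x + y) = Q x + Q y" if "x \<in> G" "y \<in> G" for x y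
    using that add2 Qadd by auto
  have PQscl: "\<phi>2 (sc c x) = c * \<phi>2 x" "Q (sc c x) = c * Q x" if "x \<in> G" for c x
    using that scl2 Qscl by auto
  have Pa: "\<phi>2 (a x) = E_lambda_a u (\<phi>2 x)" if "x \<in> G" for x using that com2 by auto
  have nz: "\<And>k::nat. of_nat k + (l - u - 1) \<noteq> 0" using nz_lem nc unfolding l_def u_def by blast
  define T where "T = Abs_fps (\<lambda>k. - fps_nth S k / (of_nat k + (l - u - 1)))"
  have Teq: "S + fps_const (l-u-1) * T + fps_X * fps_deriv T = 0" unfolding T_def by (rule T_eq[OF nz])
  define R where "R = fps_shift 1 T"
  have Tdec: "T = fps_const (fps_nth T 0) + fps_X * R" unfolding R_def by (rule fps_decomp)
  have se1: "sc c e1 \<in> G" for c using e1G subG m.subspace_scale by blast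
  have se2: "sc c e2 \<in> G" for c using e2 subG m.subspace_scale by blast
  have Pse1: "\<phi>2 (sc c e1) = 0" for c using PQscl(1)[OF e1G] Pe1 by simp
  have Qse1: "Q (sc c e1) = c" for c using PQscl(2)[OF e1G] Qe1 by simp
  have Pse2: "\<phi>2 (sc c e2) = c" for c using PQscl(1)[OF e2(1)] e2 by simp
  have Qse2: "Q (sc c e2) = 0" for c using PQscl(2)[OF e2(1)] Qe2 by simp
  have GH: "F (j+1) = G" "F j = H" "F (j-1) = F0" unfolding G_def H_def F0_def by auto
  show ?thesis
  proof (cases "fps_nth T 0 = 0")
    case True
    have TX: "T = fps_X * R" using Tdec True by simp
    define \<phi>' where "\<phi>' x = Q x - R * \<phi>2 x" for x
    define F' where "F' = {x \<in> F (j+1). \<phi>' x = 0}"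
    define v where "v = e2 + sc R e1"
    have vG: "v \<in> G" unfolding v_def using e2 se1 subG m.subspace_add by blast
    have Pv: "\<phi>2 v = 1" unfolding v_def using PQadd(1)[OF e2(1) se1] Pse1 e2 by simp
    have Qv: "Q v = R" unfolding v_def using PQadd(2)[OF e2(1) se1] Qse1 Qe2 by simp
    have vF': "v \<in> F'" unfolding F'_def \<phi>'_def using vG Pv Qv GH by simp
    have padd: "\<forall>x\<in>F (j+1). \<forall>y\<in>F (j+1). \<phi>' (x + y) = \<phi>' x + \<phi>' y"
      unfolding GH \<phi>'_def using PQadd by (simp add: algebra_simps)
    have pscl: "\<forall>c. \<forall>x\<in>F (j+1). \<phi>' (sc c x) = c * \<phi>' x"
      unfolding GH \<phi>'_def using PQscl by (simp add: algebra_simps)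
    have w: "e1 \<in> F (j+1)" "\<phi>' e1 = 1" unfolding GH \<phi>'_def using e1G Qe1 Pe1 by auto
    have pcom: "\<forall>x\<in>F (j+1). \<phi>' (a x) = E_lambda_a l (\<phi>' x)"
    proof
      fix x assume x: "x \<in> F (j+1)"
      have "S + fps_const (l-u-1) * (fps_X*R) + fps_X * fps_deriv (fps_X*R) = 0" using Teq TX by simp
      from idA[OF this, of "Q x" "\<phi>2 x"] show "\<phi>' (a x) = E_lambda_a l (\<phi>' x)"
        unfolding \<phi>'_def using x GH Qa Pa by simp
    qed
    have F'G: "F' \<subseteq> G" unfolding F'_def GH by auto
    have sadd: "\<forall>x\<in>F'. \<forall>y\<in>F'. \<phi>2 (x + y) = \<phi>2 x + \<phi>2 y" using F'G PQadd by blast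
    have sscl: "\<forall>c. \<forall>x\<in>F'. \<phi>2 (sc c x) = c * \<phi>2 x" using F'G PQscl by blast
    have sker: "{x \<in> F'. \<phi>2 x = 0} = F (j - 1)"
    proof (intro set_eqI iffI)
      fix x assume "x \<in> {x \<in> F'. \<phi>2 x = 0}"
      then show "x \<in> F (j - 1)" using kerPQ GH unfolding F'_def \<phi>'_def by auto
    next
      fix x assume "x \<in> F (j - 1)"
      then show "x \<in> {x \<in> F'. \<phi>2 x = 0}" using F0P F0G GH unfolding F'_def \<phi>'_def by auto
    qed
    have scom: "\<forall>x\<in>F'. \<phi>2 (a x) = E_lambda_a u (\<phi>2 x)" using F'G Pa by blast
    have res: "JH_series sc a n (F(j := F')) \<and> quotient_iso_E_lambda sc a F' (F (j - 1)) u \<and>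
         quotient_iso_E_lambda sc a (F (j + 1)) F' l"
      by (rule swap_final[OF mod JH j F'_def padd pscl w pcom sadd sscl _ _ sker scom, of v])
         (use vF' Pv in auto)
    have ne: "F' \<noteq> F j" using vF' Pv Hz GH by auto
    show ?thesis using res ne unfolding l_def u_def by (intro exI[of _ F'] exI[of _ u] exI[of _ l]) (simp add: u_def l_def)
  next
    case False
    define t0 where "t0 = fps_nth T 0"
    have t0: "t0 \<noteq> 0" using False t0_def by simp
    have Tt: "T = fps_const t0 + fps_X * R" using Tdec t0_def by simp
    define c where "c = fps_const (1 / t0)"
    have ct: "c * fps_const t0 = 1" unfolding c_def using t0 by simp
    have Elin: "E_lambda_a lm (c * f) = c * E_lambda_a lm f" for lm f
      unfolding E_lambda_a_def c_def by (simp add: algebra_simps)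
    define \<phi>' where "\<phi>' x = c * (T * \<phi>2 x - fps_X * Q x)" for x
    define \<psi> where "\<psi> x = c * (Q x - R * \<phi>2 x)" for x
    define F' where "F' = {x \<in> F (j+1). \<phi>' x = 0}"
    define v where "v = sc fps_X e2 + sc T e1"
    define w where "w = e2 + sc R e1"
    have vG: "v \<in> G" unfolding v_def using se2 se1 subG m.subspace_add by blast
    have wG: "w \<in> G" unfolding w_def using e2 se1 subG m.subspace_add by blast
    have Pv: "\<phi>2 v = fps_X" unfolding v_def using PQadd(1)[OF se2 se1] Pse1 Pse2 by simp
    have Qv: "Q v = T" unfolding v_def using PQadd(2)[OF se2 se1] Qse1 Qse2 by simp
    have Pw: "\<phi>2 w = 1" unfolding w_def using PQadd(1)[OF e2(1) se1] Pse1 e2 by simp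
    have Qw: "Q w = R" unfolding w_def using PQadd(2)[OF e2(1) se1] Qse1 Qe2 by simp
    have vF': "v \<in> F'" unfolding F'_def \<phi>'_def using vG Pv Qv GH by (simp add: mult.commute)
    have psv: "\<psi> v = 1" unfolding \<psi>_def using Pv Qv Tt ct by (simp add: mult.commute)
    have padd: "\<forall>x\<in>F (j+1). \<forall>y\<in>F (j+1). \<phi>' (x + y) = \<phi>' x + \<phi>' y"
      unfolding GH \<phi>'_def using PQadd by (simp add: algebra_simps)
    have pscl: "\<forall>c. \<forall>x\<in>F (j+1). \<phi>' (sc c x) = c * \<phi>' x"
      unfolding GH \<phi>'_def using PQscl by (simp add: algebra_simps)
    have wp: "w \<in> F (j+1)" "\<phi>' w = 1" unfolding GH \<phi>'_def using wG Pw Qw Tt ct by auto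
    have pcom: "\<forall>x\<in>F (j+1). \<phi>' (a x) = E_lambda_a (l - 1) (\<phi>' x)"
    proof
      fix x assume x: "x \<in> F (j+1)"
      from idB1[OF Teq, of "\<phi>2 x" "Q x"] show "\<phi>' (a x) = E_lambda_a (l - 1) (\<phi>' x)"
        unfolding \<phi>'_def Elin using x GH Qa Pa by simp
    qed
    have F'G: "F' \<subseteq> G" unfolding F'_def GH by auto
    have F'eq: "T * \<phi>2 x = fps_X * Q x" if "x \<in> F'" for x
    proof -
      have "c * (T * \<phi>2 x - fps_X * Q x) = 0" using that unfolding F'_def \<phi>'_def by auto
      then show ?thesis using t0 unfolding c_def by simp
    qed
    have sadd: "\<forall>x\<in>F'. \<forall>y\<in>F'. \<psi> (x + y) = \<psi> x + \<psi> y"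
    proof (intro ballI)
      fix x y assume "x \<in> F'" "y \<in> F'"
      then have "x \<in> G" "y \<in> G" using F'G by auto
      then show "\<psi> (x + y) = \<psi> x + \<psi> y" unfolding \<psi>_def by (simp add: PQadd algebra_simps)
    qed
    have sscl: "\<forall>c. \<forall>x\<in>F'. \<psi> (sc c x) = c * \<psi> x"
    proof (intro allI ballI)
      fix c' x assume "x \<in> F'"
      then have "x \<in> G" using F'G by auto
      then show "\<psi> (sc c' x) = c' * \<psi> x" unfolding \<psi>_def by (simp add: PQscl algebra_simps)
    qed
    have sker: "{x \<in> F'. \<psi> x = 0} = F (j - 1)"
    proof (intro set_eqI iffI)
      fix x assume "x \<in> {x \<in> F'. \<psi> x = 0}"
      then have x: "x \<in> F'" "c * (Q x - R * \<phi>2 x) = 0" unfolding \<psi>_def by auto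
      then have q: "Q x = R * \<phi>2 x" using t0 unfolding c_def by simp
      have "T * \<phi>2 x = fps_X * (R * \<phi>2 x)" using F'eq[OF x(1)] q by simp
      then have "fps_const t0 * \<phi>2 x + fps_X * (R * \<phi>2 x) = fps_X * (R * \<phi>2 x)"
        unfolding Tt by (simp add: distrib_right mult.assoc)
      then have "fps_const t0 * \<phi>2 x = 0" by simp
      then have p: "\<phi>2 x = 0" using t0 by simp
      then show "x \<in> F (j - 1)" using kerPQ GH q x F'G by auto
    next
      fix x assume "x \<in> F (j - 1)"
      then show "x \<in> {x \<in> F'. \<psi> x = 0}" using F0P F0G GH unfolding F'_def \<phi>'_def \<psi>_def by auto
    qed
    have scom: "\<forall>x\<in>F'. \<psi> (a x) = E_lambda_a (u + 1) (\<psi> x)"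
    proof
      fix x assume x: "x \<in> F'"
      have xG: "x \<in> G" using x F'G by auto
      have "\<psi> (a x) = c * ((E_lambda_a l (Q x) + S * \<phi>2 x) - R * E_lambda_a u (\<phi>2 x))"
        unfolding \<psi>_def using Qa[OF xG] Pa[OF xG] by simp
      also have "\<dots> = c * E_lambda_a (u + 1) (Q x - R * \<phi>2 x)"
        using idB2[OF Teq Tt F'eq[OF x]] by simp
      also have "\<dots> = E_lambda_a (u + 1) (\<psi> x)" unfolding \<psi>_def Elin ..
      finally show "\<psi> (a x) = E_lambda_a (u + 1) (\<psi> x)" .
    qed
    have res: "JH_series sc a n (F(j := F')) \<and> quotient_iso_E_lambda sc a F' (F (j - 1)) (u + 1) \<and>
         quotient_iso_E_lambda sc a (F (j + 1)) F' (l - 1)"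
      by (rule swap_final[OF mod JH j F'_def padd pscl wp pcom sadd sscl vF' psv sker scom])
    have ne: "F' \<noteq> F j" using vF' Pv Hz GH by (auto simp: fps_X_neq_zero)
    have i1: "lam j - (l - 1) \<in> \<int>" unfolding l_def by simp
    have "lam (j + 1) - (u + 1) = - 1" unfolding u_def by simp
    then have i2: "lam (j + 1) - (u + 1) \<in> \<int>" using Ints_1 Ints_minus by metis
    show ?thesis using res ne i1 i2 by blast
  qed
qed
end
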